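(* There exist universal constants $C,C'>0$ such that for every $m>0$, every $\lambda>0$, every $\beta\in(0,1/3)$, every $\epsilon\in(0,1)$, every odd $n\in\mathbb{N}$ with $n\epsilon\ge C\ln(1/\beta)$ and $n\ge\beta/\lambda$, and every $D\in\mathcal{SPM}_\lambda$, setting $\alpha^*=1/(n\epsilon)$, with probability at least $1-\beta$, $$\mathrm{FAIR}(D,\mathtt{DPExpMed}_{\alpha^*}(D))\le C'\left(\frac{m}{n\epsilon}\ln\frac{n\lambda}{\beta}+m\lambda\right).$$
   Context: $V=[-m/2,m/2]$. A dataset is $D=(x_1,\dots,x_n)\in V^n$, indexed so that $x_1\le\dots\le x_n$, with median (optimal location) $\mathcal{T}(D)=x_{\lceil n/2\rceil}$. $\mathrm{FAIR}(D,\ell)=\max_{1\le i\le n}\left(|x_i-\ell|-|x_i-\mathcal{T}(D)|\right)$. A distribution $P$ on $V$ with density $f_P$ and CDF $F_P$ is single-peaked at $\ell$ if $f_P(x)\le f_P(y)$ whenever $x\le y\le\ell$ or $x\ge y\ge\ell$; $\mathcal{P}$ is the class of absolutely continuous distributions on $V$ single-peaked at their median $F_P^{-1}(0.5)$. With empirical CDF $F_D(\ell)=\frac1n|\{i:x_i\le\ell\}|$ and $\mathrm{KS}(D,P)=\sup_x|F_D(x)-F_P(x)|$, $\mathcal{SPM}_\lambda$ is the set of $D\in V^n$ with $\mathrm{KS}(D,P)\le\lambda$ for some $P\in\mathcal{P}$. The percentile loss $q(D,a)$ for $a\in V$ is: $\min\{|\lceil n/2\rceil-i|: a\in[x_i,\mathcal{T}(D)]\}$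 if $a\in[x_1,\mathcal{T}(D)]$; $\min\{|\lceil n/2\rceil-i|: a\in[\mathcal{T}(D),x_i]\}$ if $a\in(\mathcal{T}(D),x_n]$; $\lceil n/2\rceil$ otherwise. The widened loss is $p_\alpha(D,\ell)=\min_{a\in V:|a-\ell|\le\alpha m}q(D,a)$. $\mathtt{DPExpMed}_\alpha(D)$ is the random point of $V$ with density proportional to $\exp(-\frac{\epsilon}{2}p_\alpha(D,\ell))$. *)

theory Defs
  imports "HOL-Analysis.Analysis"
begin

definition Vset :: "real \<Rightarrow> real set" where
  "Vset m = {-m/2..m/2}"

text \<open>A dataset is a list D of reals; x_i (1-based) is the i-th smallest entry.\<close>
definition xi :: "real list \<Rightarrow> nat \<Rightarrow> real" where
  "xi D i = sort D ! (i - 1)"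

definition medidx :: "nat \<Rightarrow> nat" where
  "medidx n = (n + 1) div 2"

definition med :: "real list \<Rightarrow> real" where
  "med D = xi D (medidx (length D))"

definition FAIR :: "real list \<Rightarrow> real \<Rightarrow> real" where
  "FAIR D l = Max ((\<lambda>i. \<bar>xi D i - l\<bar> - \<bar>xi D i - med D\<bar>) ` {1..length D})"

definition pctl_loss :: "real list \<Rightarrow> real \<Rightarrow> nat" where
  "pctl_loss D a =
    (let n = length D; c = medidx n; T = med D in
     if xi D 1 \<le> a \<and> a \<le> T then
       Min ((\<lambda>i. nat \<bar>int c - int i\<bar>) ` {i \<in> {1..n}. xi D i \<le> a \<and> a \<le> T})
     else if T < a \<and> a \<le> xi D n then
       Min ((\<lambda>i. nat \<bar>int c - int i\<bar>) ` {i \<in> {1..n}. T \<le> a \<and> a \<le> xi D i})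
     else c)"

definition widened_loss :: "real \<Rightarrow> real \<Rightarrow> real list \<Rightarrow> real \<Rightarrow> nat" where
  "widened_loss m \<alpha> D l = Min (pctl_loss D ` {a \<in> Vset m. \<bar>a - l\<bar> \<le> \<alpha> * m})"

text \<open>Unnormalised density of DPExpMed_alpha(D) on V.\<close>
definition expmed_weight :: "real \<Rightarrow> real \<Rightarrow> real \<Rightarrow> real list \<Rightarrow> real \<Rightarrow> real" where
  "expmed_weight \<epsilon> m \<alpha> D l = exp (- (\<epsilon> / 2) * real (widened_loss m \<alpha> D l))"

definition expmed_prob :: "real \<Rightarrow> real \<Rightarrow> real \<Rightarrow> real list \<Rightarrow> real set \<Rightarrow> real" where
  "expmed_prob \<epsilon> m \<alpha> D S =
     integral (Vset m) (\<lambda>l. if l \<in> S then expmed_weight \<epsilon> m \<alpha> D l else 0)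
     / integral (Vset m) (expmed_weight \<epsilon> m \<alpha> D)"

definition emp_cdf :: "real list \<Rightarrow> real \<Rightarrow> real" where
  "emp_cdf D l = real (length (filter (\<lambda>x. x \<le> l) D)) / real (length D)"

definition is_density :: "real \<Rightarrow> (real \<Rightarrow> real) \<Rightarrow> bool" where
  "is_density m f \<longleftrightarrow> (\<forall>x \<in> Vset m. 0 \<le> f x) \<and> f integrable_on Vset m
      \<and> integral (Vset m) f = 1"

definition cdf_of :: "real \<Rightarrow> (real \<Rightarrow> real) \<Rightarrow> real \<Rightarrow> real" where
  "cdf_of m f x = integral {-m/2..min x (m/2)} f"

definition median_of :: "real \<Rightarrow> (real \<Rightarrow> real) \<Rightarrow> real" where
  "median_of m f = Inf {x. cdf_of m f x \<ge> 1/2}"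

definition single_peaked_at :: "real \<Rightarrow> (real \<Rightarrow> real) \<Rightarrow> real \<Rightarrow> bool" where
  "single_peaked_at m f l \<longleftrightarrow>
     (\<forall>x \<in> Vset m. \<forall>y \<in> Vset m.
        ((x \<le> y \<and> y \<le> l) \<or> (x \<ge> y \<and> y \<ge> l)) \<longrightarrow> f x \<le> f y)"

text \<open>The class P, represented by densities.\<close>
definition in_classP :: "real \<Rightarrow> (real \<Rightarrow> real) \<Rightarrow> bool" where
  "in_classP m f \<longleftrightarrow> is_density m f \<and> single_peaked_at m f (median_of m f)"

definition SPM :: "real \<Rightarrow> real \<Rightarrow> real list \<Rightarrow> bool" where
  "SPM m lam D \<longleftrightarrow> set D \<subseteq> Vset m \<and>
     (\<exists>f. in_classP m f \<and> (\<forall>x. \<bar>emp_cdf D x - cdf_of m f x\<bar> \<le> lam))"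

end

theory Submission
  imports Defs
begin


lemma len_filter_sort: "length (filter P (sort xs)) = length (filter P xs)"
  by (metis mset_filter mset_sort size_mset)

lemma xi_mono:
  assumes "1 \<le> i" "i \<le> j" "j \<le> length D"
  shows "xi D i \<le> xi D j"
  unfolding xi_def using assms by (intro sorted_nth_mono) auto

lemma xi_in_set:
  assumes "1 \<le> i" "i \<le> length D"
  shows "xi D i \<in> set D"
proof -
  have "i - 1 < length (sort D)" using assms by simp
  then have "sort D ! (i - 1) \<in> set (sort D)" by (rule nth_mem)
  then show ?thesis by (simp add: xi_def)
qed

lemma cnt_card:
  "length (filter (\<lambda>y. y \<le> x) D) = card {i \<in> {1..length D}. xi D i \<le> x}"
proof -
  have "length (filter (\<lambda>y. y \<le> x) D) = length (filter (\<lambda>y. y \<le> x) (sort D))"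
    by (simp add: len_filter_sort)
  also have "\<dots> = card {i. i < length D \<and> sort D ! i \<le> x}"
    by (simp add: length_filter_conv_card)
  also have "\<dots> = card (Suc ` {i. i < length D \<and> sort D ! i \<le> x})"
    by (simp add: card_image)
  also have "Suc ` {i. i < length D \<and> sort D ! i \<le> x} = {i \<in> {1..length D}. xi D i \<le> x}"
  proof (rule set_eqI, rule iffI)
    fix y assume "y \<in> Suc ` {i. i < length D \<and> sort D ! i \<le> x}"
    then show "y \<in> {i \<in> {1..length D}. xi D i \<le> x}" unfolding xi_def by auto
  next
    fix y assume y: "y \<in> {i \<in> {1..length D}. xi D i \<le> x}"
    show "y \<in> Suc ` {i. i < length D \<and> sort D ! i \<le> x}"
      by (rule image_eqI[of _ _ "y - 1"]) (use y in \<open>auto simp: xi_def\<close>)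
  qed
  finally show ?thesis .
qed

lemma cnt_upper:
  assumes "1 \<le> k" "k \<le> length D" "x < xi D k"
  shows "card {i \<in> {1..length D}. xi D i \<le> x} \<le> k - 1"
proof -
  have "{i \<in> {1..length D}. xi D i \<le> x} \<subseteq> {1..k-1}"
  proof
    fix i assume i: "i \<in> {i \<in> {1..length D}. xi D i \<le> x}"
    have "\<not> k \<le> i"
    proof
      assume "k \<le> i"
      then have "xi D k \<le> xi D i" using i assms by (intro xi_mono) auto
      then show False using i assms by auto
    qed
    then show "i \<in> {1..k-1}" using i by auto
  qed
  then have "card {i \<in> {1..length D}. xi D i \<le> x} \<le> card {1..k-1}"
    by (intro card_mono) auto
  then show ?thesis by simp
qed

lemma cnt_lower:
  assumes "1 \<le> k" "k \<le> length D" "xi D k \<le> x"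
  shows "k \<le> card {i \<in> {1..length D}. xi D i \<le> x}"
proof -
  have "{1..k} \<subseteq> {i \<in> {1..length D}. xi D i \<le> x}"
    using assms by (auto intro: order_trans[OF xi_mono])
  then have "card {1..k} \<le> card {i \<in> {1..length D}. xi D i \<le> x}"
    by (intro card_mono) auto
  then show ?thesis by simp
qed


lemma medidx_bounds:
  assumes "length D \<ge> 1"
  shows "1 \<le> medidx (length D)" "medidx (length D) \<le> length D"
  using assms unfolding medidx_def by auto

lemma x1_le_T:
  assumes "length D \<ge> 1"
  shows "xi D 1 \<le> med D" "med D \<le> xi D (length D)"
  using assms medidx_bounds[OF assms] unfolding med_def by (auto intro: xi_mono)

lemma q_le_c:
  assumes "length D \<ge> 1"
  shows "pctl_loss D a \<le> medidx (length D)"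
proof -
  let ?n = "length D" let ?c = "medidx ?n" let ?T = "med D"
  let ?g = "\<lambda>i. nat \<bar>int ?c - int i\<bar>"
  have c: "1 \<le> ?c" "?c \<le> ?n" using medidx_bounds[OF assms] by auto
  have c2: "?n \<le> 2 * ?c" unfolding medidx_def by auto
  show ?thesis
  proof (cases "xi D 1 \<le> a \<and> a \<le> ?T")
    case True
    have "1 \<in> {i \<in> {1..?n}. xi D i \<le> a \<and> a \<le> ?T}" using True assms by auto
    then have "Min (?g ` {i \<in> {1..?n}. xi D i \<le> a \<and> a \<le> ?T}) \<le> ?g 1"
      by (intro Min_le finite_imageI imageI) auto
    also have "\<dots> \<le> ?c" using c by auto
    finally show ?thesis using True unfolding pctl_loss_def Let_def by simp
  next
    case F1: False
    show ?thesis
    proof (cases "?T < a \<and> a \<le> xi D ?n")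
      case True
      have "?n \<in> {i \<in> {1..?n}. ?T \<le> a \<and> a \<le> xi D i}" using True assms by auto
      then have "Min (?g ` {i \<in> {1..?n}. ?T \<le> a \<and> a \<le> xi D i}) \<le> ?g ?n"
        by (intro Min_le finite_imageI imageI) auto
      also have "\<dots> \<le> ?c" using c c2 by auto
      finally show ?thesis using True F1 unfolding pctl_loss_def Let_def by simp
    next
      case False
      then show ?thesis using F1 unfolding pctl_loss_def Let_def by auto
    qed
  qed
qed

lemma q_T:
  assumes "length D \<ge> 1"
  shows "pctl_loss D (med D) = 0"
proof -
  let ?n = "length D" let ?c = "medidx ?n" let ?T = "med D"
  let ?g = "\<lambda>i. nat \<bar>int ?c - int i\<bar>"
  have c: "1 \<le> ?c" "?c \<le> ?n" using medidx_bounds[OF assms] by auto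
  have "?c \<in> {i \<in> {1..?n}. xi D i \<le> ?T \<and> ?T \<le> ?T}" using c unfolding med_def by auto
  then have "Min (?g ` {i \<in> {1..?n}. xi D i \<le> ?T \<and> ?T \<le> ?T}) \<le> ?g ?c"
    by (intro Min_le finite_imageI imageI) auto
  then show ?thesis using x1_le_T[OF assms] unfolding pctl_loss_def Let_def by simp
qed

lemma q_anti:
  assumes "length D \<ge> 1" "a \<le> b" "b \<le> med D"
  shows "pctl_loss D b \<le> pctl_loss D a"
proof -
  let ?n = "length D" let ?c = "medidx ?n" let ?T = "med D"
  let ?g = "\<lambda>i. nat \<bar>int ?c - int i\<bar>"
  show ?thesis
  proof (cases "xi D 1 \<le> a")
    case True
    have ne: "1 \<in> {i \<in> {1..?n}. xi D i \<le> a \<and> a \<le> ?T}" using True assms by auto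
    have "Min (?g ` {i \<in> {1..?n}. xi D i \<le> b \<and> b \<le> ?T}) \<le> Min (?g ` {i \<in> {1..?n}. xi D i \<le> a \<and> a \<le> ?T})"
      using ne assms by (intro Min_antimono) auto
    then show ?thesis using True assms unfolding pctl_loss_def Let_def by simp
  next
    case False
    then have "pctl_loss D a = ?c" using assms unfolding pctl_loss_def Let_def by auto
    then show ?thesis using q_le_c[OF assms(1)] by simp
  qed
qed

lemma q_mono:
  assumes "length D \<ge> 1" "med D \<le> a" "a \<le> b"
  shows "pctl_loss D a \<le> pctl_loss D b"
proof (cases "a = med D")
  case True
  then show ?thesis using q_T[OF assms(1)] by simp
next
  case aT: False
  let ?n = "length D" let ?c = "medidx ?n" let ?T = "med D"
  let ?g = "\<lambda>i. nat \<bar>int ?c - int i\<bar>"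
  show ?thesis
  proof (cases "b \<le> xi D ?n")
    case True
    have ne: "?n \<in> {i \<in> {1..?n}. ?T \<le> b \<and> b \<le> xi D i}" using True assms by auto
    have "Min (?g ` {i \<in> {1..?n}. ?T \<le> a \<and> a \<le> xi D i}) \<le> Min (?g ` {i \<in> {1..?n}. ?T \<le> b \<and> b \<le> xi D i})"
      using ne assms by (intro Min_antimono) auto
    then show ?thesis using True assms aT unfolding pctl_loss_def Let_def by simp
  next
    case False
    then have "pctl_loss D b = ?c" using assms aT unfolding pctl_loss_def Let_def by auto
    then show ?thesis using q_le_c[OF assms(1)] by simp
  qed
qed


definition Wn :: "real \<Rightarrow> real \<Rightarrow> real \<Rightarrow> real set" where
  "Wn m \<alpha> l = {a \<in> Vset m. \<bar>a - l\<bar> \<le> \<alpha> * m}"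

lemma fin_q_img:
  assumes "length D \<ge> 1"
  shows "finite (pctl_loss D ` S)"
  by (rule finite_subset[of _ "{..medidx (length D)}"]) (use q_le_c[OF assms] in auto)

lemma p_le_q:
  assumes "length D \<ge> 1" "a \<in> Wn m \<alpha> l"
  shows "widened_loss m \<alpha> D l \<le> pctl_loss D a"
  unfolding widened_loss_def using assms(2) unfolding Wn_def
  by (intro Min_le fin_q_img[OF assms(1)] imageI) auto

lemma p_att:
  assumes "length D \<ge> 1" "l \<in> Vset m" "\<alpha> \<ge> 0" "m > 0"
  shows "\<exists>a \<in> Wn m \<alpha> l. widened_loss m \<alpha> D l = pctl_loss D a"
proof -
  have "l \<in> Wn m \<alpha> l" using assms unfolding Wn_def by auto
  then have ne: "pctl_loss D ` Wn m \<alpha> l \<noteq> {}" by auto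
  have "Min (pctl_loss D ` Wn m \<alpha> l) \<in> pctl_loss D ` Wn m \<alpha> l"
    by (rule Min_in[OF fin_q_img[OF assms(1)] ne])
  then show ?thesis unfolding widened_loss_def Wn_def by auto
qed

lemma p_zero:
  assumes "length D \<ge> 1" "med D \<in> Vset m" "\<bar>l - med D\<bar> \<le> \<alpha> * m"
  shows "widened_loss m \<alpha> D l = 0"
proof -
  have "med D \<in> Wn m \<alpha> l" using assms unfolding Wn_def by auto
  then show ?thesis using p_le_q[OF assms(1)] q_T[OF assms(1)] by fastforce
qed

lemma p_anti:
  assumes "length D \<ge> 1" "\<alpha> \<ge> 0" "m > 0" "l1 \<in> Vset m" "l2 \<in> Vset m" "l1 \<le> l2" "l2 \<le> med D"
  shows "widened_loss m \<alpha> D l2 \<le> widened_loss m \<alpha> D l1"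
proof -
  obtain a where a: "a \<in> Wn m \<alpha> l1" "widened_loss m \<alpha> D l1 = pctl_loss D a"
    using p_att[OF assms(1,4,2,3)] by blast
  show ?thesis
  proof (cases "a \<ge> l2 - \<alpha> * m")
    case True
    then have "a \<in> Wn m \<alpha> l2" using a assms unfolding Wn_def by auto
    then show ?thesis using p_le_q[OF assms(1)] a by metis
  next
    case False
    have am: "0 \<le> \<alpha> * m" using assms by simp
    define a' where "a' = l2 - \<alpha> * m"
    have "a' \<in> Wn m \<alpha> l2" using a assms False unfolding Wn_def a'_def Vset_def by auto
    then have "widened_loss m \<alpha> D l2 \<le> pctl_loss D a'" by (rule p_le_q[OF assms(1)])
    also have "\<dots> \<le> pctl_loss D a"
      proof (rule q_anti[OF assms(1)])
        show "a \<le> a'" using False a'_def by linarith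
        show "a' \<le> med D" using assms(7) am a'_def by linarith
      qed
    finally show ?thesis using a by simp
  qed
qed

lemma p_mono:
  assumes "length D \<ge> 1" "\<alpha> \<ge> 0" "m > 0" "l1 \<in> Vset m" "l2 \<in> Vset m" "l1 \<le> l2" "med D \<le> l1"
  shows "widened_loss m \<alpha> D l1 \<le> widened_loss m \<alpha> D l2"
proof -
  obtain a where a: "a \<in> Wn m \<alpha> l2" "widened_loss m \<alpha> D l2 = pctl_loss D a"
    using p_att[OF assms(1,5,2,3)] by blast
  show ?thesis
  proof (cases "a \<le> l1 + \<alpha> * m")
    case True
    then have "a \<in> Wn m \<alpha> l1" using a assms unfolding Wn_def by auto
    then show ?thesis using p_le_q[OF assms(1)] a by metis
  next
    case False
    have am: "0 \<le> \<alpha> * m" using assms by simp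
    define a' where "a' = l1 + \<alpha> * m"
    have "a' \<in> Wn m \<alpha> l1" using a assms False unfolding Wn_def a'_def Vset_def by auto
    then have "widened_loss m \<alpha> D l1 \<le> pctl_loss D a'" by (rule p_le_q[OF assms(1)])
    also have "\<dots> \<le> pctl_loss D a"
      proof (rule q_mono[OF assms(1)])
        show "a' \<le> a" using False a'_def by linarith
        show "med D \<le> a'" using assms(7) am a'_def by linarith
      qed
    finally show ?thesis using a by simp
  qed
qed

lemma p_lower:
  assumes "length D \<ge> 1" "\<alpha> \<ge> 0" "m > 0" "l \<in> Vset m" "K \<ge> 0"
    and q: "\<And>a. a \<in> Vset m \<Longrightarrow> real (pctl_loss D a) \<ge> K * \<bar>a - med D\<bar> - L"
  shows "real (widened_loss m \<alpha> D l) \<ge> K * (\<bar>l - med D\<bar> - \<alpha> * m) - L"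
proof -
  obtain a where a: "a \<in> Wn m \<alpha> l" "widened_loss m \<alpha> D l = pctl_loss D a"
    using p_att[OF assms(1,4,2,3)] by blast
  have "\<bar>a - med D\<bar> \<ge> \<bar>l - med D\<bar> - \<alpha> * m" using a(1) unfolding Wn_def by auto
  then have "K * \<bar>a - med D\<bar> \<ge> K * (\<bar>l - med D\<bar> - \<alpha> * m)" using assms(5) by (rule mult_left_mono)
  moreover have "real (pctl_loss D a) \<ge> K * \<bar>a - med D\<bar> - L" using a(1) q unfolding Wn_def by auto
  ultimately show ?thesis using a(2) by simp
qed


locale dens =
  fixes m :: real and f :: "real \<Rightarrow> real"
  assumes m: "m > 0" and cls: "in_classP m f"
begin

definition "F = cdf_of m f"
definition "mu = median_of m f"

lemma nonneg: "x \<in> Vset m \<Longrightarrow> 0 \<le> f x"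
  using cls unfolding in_classP_def is_density_def by auto

lemma intV: "f integrable_on {-m/2..m/2}"
  using cls unfolding in_classP_def is_density_def Vset_def by auto

lemma int1: "integral {-m/2..m/2} f = 1"
  using cls unfolding in_classP_def is_density_def Vset_def by auto

lemma intsub: "-m/2 \<le> u \<Longrightarrow> v \<le> m/2 \<Longrightarrow> f integrable_on {u..v}"
  by (rule integrable_on_subinterval[OF intV]) auto

lemma F_V: "x \<in> Vset m \<Longrightarrow> F x = integral {-m/2..x} f"
  unfolding F_def cdf_of_def Vset_def by (simp add: min_def)

lemma F_top: "F (m/2) = 1"
  using F_V[of "m/2"] int1 m by (simp add: Vset_def)

lemma F_below: "x < -m/2 \<Longrightarrow> F x = 0"
  unfolding F_def cdf_of_def by (simp add: min_def)

lemma F_diff: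
  assumes "u \<in> Vset m" "v \<in> Vset m" "u \<le> v"
  shows "F v - F u = integral {u..v} f"
proof -
  have "integral {-m/2..u} f + integral {u..v} f = integral {-m/2..v} f"
    using assms by (intro Henstock_Kurzweil_Integration.integral_combine[OF _ _ intsub]) (auto simp: Vset_def)
  then show ?thesis using F_V assms by auto
qed

lemma F_compl:
  assumes "v \<in> Vset m"
  shows "1 - F v = integral {v..m/2} f"
  using F_diff[OF assms, of "m/2"] F_top assms m by (simp add: Vset_def)

lemma mu_V: "mu \<in> Vset m"
proof -
  let ?S = "{x. F x \<ge> 1/2}"
  have top: "m/2 \<in> ?S" using F_top by simp
  have lb: "\<And>x. x \<in> ?S \<Longrightarrow> -m/2 \<le> x"
  proof (rule ccontr)
    fix x assume "x \<in> ?S" "\<not> -m/2 \<le> x"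
    then show False using F_below[of x] by simp
  qed
  have "Inf ?S \<le> m/2" using top lb by (intro cInf_lower) (auto simp: bdd_below_def)
  moreover have "-m/2 \<le> Inf ?S" using top lb by (intro cInf_greatest) auto
  ultimately show ?thesis unfolding mu_def median_of_def F_def Vset_def by auto
qed

lemma sp: "x \<in> Vset m \<Longrightarrow> y \<in> Vset m \<Longrightarrow> (x \<le> y \<and> y \<le> mu) \<or> (x \<ge> y \<and> y \<ge> mu) \<Longrightarrow> f x \<le> f y"
  using cls unfolding in_classP_def single_peaked_at_def mu_def by blast

lemma f_le_peak: "x \<in> Vset m \<Longrightarrow> f x \<le> f mu"
  using sp[of x mu] mu_V by force

lemma int_ge_const:
  assumes "-m/2 \<le> u" "u \<le> v" "v \<le> m/2" "\<And>x. x \<in> {u..v} \<Longrightarrow> k \<le> f x"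
  shows "(v - u) * k \<le> integral {u..v} f"
proof -
  have "integral {u..v} (\<lambda>x. k) \<le> integral {u..v} f"
    using assms by (intro integral_le intsub) auto
  then show ?thesis using assms by simp
qed

lemma int_le_const:
  assumes "-m/2 \<le> u" "u \<le> v" "v \<le> m/2" "\<And>x. x \<in> {u..v} \<Longrightarrow> f x \<le> k"
  shows "integral {u..v} f \<le> (v - u) * k"
proof -
  have "integral {u..v} f \<le> integral {u..v} (\<lambda>x. k)"
    using assms by (intro integral_le intsub) auto
  then show ?thesis using assms by simp
qed

lemma F_lip:
  assumes "u \<in> Vset m" "v \<in> Vset m" "u \<le> v"
  shows "F v - F u \<le> (v - u) * f mu"
  using F_diff[OF assms] int_le_const[of u v "f mu"] assms f_le_peak by (auto simp: Vset_def)

lemma F_mono: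
  assumes "u \<in> Vset m" "v \<in> Vset m" "u \<le> v"
  shows "F u \<le> F v"
  using F_diff[OF assms] int_ge_const[of u v 0] assms nonneg by (auto simp: Vset_def)

lemma left_growth:
  assumes "u \<in> Vset m" "v \<in> Vset m" "u \<le> v" "v \<le> mu"
  shows "F v - F u \<ge> (v - u) * F u / m"
proof -
  have fu: "0 \<le> f u" using nonneg assms by auto
  have "(v - u) * f u \<le> integral {u..v} f"
    using assms by (intro int_ge_const) (auto simp: Vset_def intro!: sp)
  then have "F v - F u \<ge> (v - u) * f u" using F_diff[OF assms(1-3)] by simp
  moreover have "integral {-m/2..u} f \<le> (u - (-m/2)) * f u"
    using assms by (intro int_le_const) (auto simp: Vset_def intro!: sp)
  then have "F u \<le> (u - (-m/2)) * f u" using F_V[OF assms(1)] by simp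
  moreover have "(u - (-m/2)) * f u \<le> m * f u" using fu assms by (intro mult_right_mono) (auto simp: Vset_def)
  ultimately have "F u \<le> m * f u" "(v - u) * f u \<le> F v - F u" by auto
  then have "F u / m \<le> f u" using m by (simp add: divide_le_eq mult.commute)
  then have "(v - u) * (F u / m) \<le> (v - u) * f u" using assms by (intro mult_left_mono) auto
  then show ?thesis using \<open>(v - u) * f u \<le> F v - F u\<close> by simp
qed

lemma right_growth:
  assumes "u \<in> Vset m" "v \<in> Vset m" "u \<le> v" "mu \<le> u"
  shows "F v - F u \<ge> (v - u) * (1 - F v) / m"
proof -
  have fv: "0 \<le> f v" using nonneg assms by auto
  have "(v - u) * f v \<le> integral {u..v} f"
    using assms by (intro int_ge_const) (auto simp: Vset_def intro!: sp)
  then have "F v - F u \<ge> (v - u) * f v" using F_diff[OF assms(1-3)] by simp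
  moreover have "integral {v..m/2} f \<le> (m/2 - v) * f v"
    using assms by (intro int_le_const) (auto simp: Vset_def intro!: sp)
  then have "1 - F v \<le> (m/2 - v) * f v" using F_compl[OF assms(2)] by simp
  moreover have "(m/2 - v) * f v \<le> m * f v" using fv assms by (intro mult_right_mono) (auto simp: Vset_def)
  ultimately have "1 - F v \<le> m * f v" "(v - u) * f v \<le> F v - F u" by auto
  then have "(1 - F v) / m \<le> f v" using m by (simp add: divide_le_eq mult.commute)
  then have "(v - u) * ((1 - F v) / m) \<le> (v - u) * f v" using assms by (intro mult_left_mono) auto
  then show ?thesis using \<open>(v - u) * f v \<le> F v - F u\<close> by simp
qed

lemma growth:
  assumes "u \<in> Vset m" "v \<in> Vset m" "u \<le> v" "F u \<ge> 1/4" "F v \<le> 3/4"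
  shows "F v - F u \<ge> (v - u) / (4 * m)"
proof -
  have key1: "(b - a) * F a / m \<ge> (b - a) / (4 * m)" if "a \<le> b" "F a \<ge> 1/4" for a b
  proof -
    have "(b - a) * (1/4) \<le> (b - a) * F a" using that by (intro mult_left_mono) auto
    then have "(b - a) * (1/4) / m \<le> (b - a) * F a / m" using m by (intro divide_right_mono) auto
    then show ?thesis by simp
  qed
  have key2: "(b - a) * (1 - F b) / m \<ge> (b - a) / (4 * m)" if "a \<le> b" "F b \<le> 3/4" for a b
  proof -
    have "(b - a) * (1/4) \<le> (b - a) * (1 - F b)" using that by (intro mult_left_mono) auto
    then have "(b - a) * (1/4) / m \<le> (b - a) * (1 - F b) / m" using m by (intro divide_right_mono) auto
    then show ?thesis by simp
  qed
  show ?thesis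
  proof (cases "v \<le> mu")
    case True
    then show ?thesis using left_growth[OF assms(1-3) True] key1[OF assms(3,4)] by linarith
  next
    case vmu: False
    show ?thesis
    proof (cases "mu \<le> u")
      case True
      then show ?thesis using right_growth[OF assms(1-3) True] key2[OF assms(3,5)] by linarith
    next
      case False
      have A: "F mu - F u \<ge> (mu - u) / (4 * m)"
        using left_growth[OF assms(1) mu_V] key1[of u mu] False assms by auto
      have B: "F v - F mu \<ge> (v - mu) / (4 * m)"
        using right_growth[OF mu_V assms(2)] key2[of mu v] vmu assms by auto
      have "(v - u) / (4 * m) = (mu - u) / (4 * m) + (v - mu) / (4 * m)" by (simp add: diff_divide_distrib)
      then show ?thesis using A B by linarith
    qed
  qed
qed

end


locale dset0 = dens +
  fixes D :: "real list"
  assumes len: "length D \<ge> 1" and oddn: "odd (length D)" and setD: "set D \<subseteq> Vset m"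
begin

abbreviation "n \<equiv> length D"
abbreviation "c \<equiv> medidx (length D)"
abbreviation "T \<equiv> med D"
definition "N x = card {i \<in> {1..length D}. xi D i \<le> x}"

lemma c_real: "real c = (real n + 1) / 2"
proof -
  obtain k where "n = 2 * k + 1" using oddn oddE by blast
  then show ?thesis unfolding medidx_def by simp
qed

lemma c_b: "1 \<le> c" "c \<le> n" using medidx_bounds[OF len] by auto

lemma xV: "1 \<le> i \<Longrightarrow> i \<le> n \<Longrightarrow> xi D i \<in> Vset m"
  using xi_in_set setD by blast

lemma TV: "T \<in> Vset m" unfolding med_def using xV c_b by auto

lemma npos: "(0::real) < real n"
proof -
  have "0 < n" using len by linarith
  then show ?thesis by simp
qed

lemma emp: "emp_cdf D x = real (N x) / real n"
  unfolding emp_cdf_def N_def cnt_card by simp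

end

locale dset = dset0 +
  fixes lam :: real
  assumes ks: "\<And>x. \<bar>emp_cdf D x - F x\<bar> \<le> lam" and lam: "lam \<le> 1/4"
begin

lemma N_up: "real (N x) \<le> real n * F x + real n * lam"
proof -
  have "real (N x) / real n \<le> F x + lam" using ks[of x] emp[of x] by auto
  then have "real (N x) \<le> (F x + lam) * real n" using pos_divide_le_eq[OF npos] by blast
  then show ?thesis by (simp add: algebra_simps)
qed

lemma N_lo: "real n * F x - real n * lam \<le> real (N x)"
proof -
  have "F x - lam \<le> real (N x) / real n" using ks[of x] emp[of x] by auto
  then have "(F x - lam) * real n \<le> real (N x)" using pos_le_divide_eq[OF npos] by blast
  then show ?thesis by (simp add: algebra_simps)
qed

lemma FT_lo: "real n * F T \<ge> real c - real n * lam"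
proof -
  have "c \<le> N T" unfolding N_def med_def using c_b by (intro cnt_lower) auto
  then show ?thesis using N_up[of T] by linarith
qed

lemma mult_n_growth:
  assumes "u \<in> Vset m" "v \<in> Vset m" "u \<le> v" "F u \<ge> 1/4" "F v \<le> 3/4"
  shows "real n * F v - real n * F u \<ge> real n * (v - u) / (4 * m)"
proof -
  have "real n * ((v - u) / (4 * m)) \<le> real n * (F v - F u)"
    using growth[OF assms] by (intro mult_left_mono) auto
  then show ?thesis by (simp add: algebra_simps)
qed

lemma absm: "a \<in> Vset m \<Longrightarrow> real n / (8 * m) * \<bar>a - T\<bar> \<le> real n / 8"
proof -
  assume a: "a \<in> Vset m"
  have "\<bar>a - T\<bar> \<le> m" using a TV unfolding Vset_def by auto
  then have "real n / (8 * m) * \<bar>a - T\<bar> \<le> real n / (8 * m) * m" by (intro mult_left_mono) (use m in auto)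
  then show ?thesis using m by simp
qed

lemma q_lower:
  assumes a: "a \<in> Vset m"
  shows "real (pctl_loss D a) \<ge> real n / (8 * m) * \<bar>a - T\<bar> - 2 * (real n * lam)"
proof -
  define X where "X = real n / (8 * m) * \<bar>a - T\<bar>"
  have main: "X - 2 * (real n * lam) \<le> real (pctl_loss D a)"
  proof -
  let ?g = "\<lambda>i. nat \<bar>int c - int i\<bar>"
  let ?B = "real n / (8 * m) * \<bar>a - T\<bar> - 2 * (real n * lam)"
  have lam0: "0 \<le> lam" using ks[of 0] by linarith
  have ab: "X \<le> real n / 8" unfolding X_def by (rule absm[OF a])
  have cr: "real c = (real n + 1) / 2" by (rule c_real)
  have FT: "real n * F T \<ge> real c - real n * lam" by (rule FT_lo)
  have "real n * lam \<le> real n * (1/4)" by (rule mult_left_mono) (use lam in auto)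
  then have nl: "real n * lam \<le> real n / 4" by simp
  have nl0: "0 \<le> real n * lam" using lam0 by simp
  show ?thesis
  proof (cases "xi D 1 \<le> a \<and> a \<le> T")
    case br1: True
    define A where "A = {i \<in> {1..n}. xi D i \<le> a \<and> a \<le> T}"
    have q: "pctl_loss D a = Min (?g ` A)" using br1 unfolding pctl_loss_def Let_def A_def by simp
    have "1 \<in> A" using br1 len unfolding A_def by auto
    then obtain i where i: "i \<in> A" "pctl_loss D a = ?g i"
      using Min_in[of "?g ` A"] q unfolding A_def by fastforce
    show ?thesis
    proof (cases "a = T")
      case True
      then show ?thesis using nl0 unfolding X_def by simp
    next
      case False
      then have aT: "a < T" using br1 by auto
      have ic: "i < c"
      proof (rule ccontr)
        assume "\<not> i < c"
        then have "xi D c \<le> xi D i" using i c_b unfolding A_def by (intro xi_mono) auto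
        then show False using i aT unfolding A_def med_def by auto
      qed
      have gi: "real (pctl_loss D a) = real c - real i" using ic i(2) by simp
      have "i \<le> N a" unfolding N_def using i by (intro cnt_lower) (auto simp: A_def)
      then have Na: "real i \<le> real (N a)" by simp
      define a2 where "a2 = (a + T) / 2"
      have a2T: "a2 < T" "a \<le> a2" using aT unfolding a2_def by auto
      have a2V: "a2 \<in> Vset m" using a TV a2T unfolding Vset_def by auto
      have "N a2 \<le> c - 1" unfolding N_def using c_b a2T by (intro cnt_upper) (auto simp: med_def)
      then have Na2: "real (N a2) \<le> real c - 1" using c_b by linarith
      have Fa2: "real n * F a2 \<le> real c - 1 + real n * lam" using N_lo[of a2] Na2 by linarith
      show ?thesis
      proof (cases "F a < 1/4")
        case True
        then have "real n * F a \<le> real n * (1/4)" by (intro mult_left_mono) auto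
        then have "real n * F a \<le> real n / 4" by simp
        then have "real (N a) \<le> real n / 4 + real n * lam" using N_up[of a] by linarith
        then have "real (pctl_loss D a) \<ge> real c - real n / 4 - real n * lam" using Na gi by linarith
        then show ?thesis using ab cr nl0 npos by argo
      next
        case False
        have "F a2 \<le> 3/4"
        proof -
          have "real n * F a2 \<le> real n * (3/4)" using Fa2 cr nl npos by argo
          then show ?thesis using npos by (rule mult_left_le_imp_le)
        qed
        then have G: "real n * F a2 - real n * F a \<ge> real n * (a2 - a) / (4 * m)"
          using False a a2V a2T by (intro mult_n_growth) auto
        have "real n * (a2 - a) / (4 * m) = X"
          using aT unfolding a2_def X_def by (simp add: field_simps)
        then show ?thesis using G N_up[of a] Na gi nl0 npos Fa2 by argo
      qed
    qed
  next
    case nb1: False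
    show ?thesis
    proof (cases "T < a \<and> a \<le> xi D n")
      case br2: True
      define A where "A = {i \<in> {1..n}. T \<le> a \<and> a \<le> xi D i}"
      have q: "pctl_loss D a = Min (?g ` A)" using br2 nb1 unfolding pctl_loss_def Let_def A_def by simp
      have "n \<in> A" using br2 len unfolding A_def by auto
      then obtain i where i: "i \<in> A" "pctl_loss D a = ?g i"
        using Min_in[of "?g ` A"] q unfolding A_def by fastforce
      have ic: "c < i"
      proof (rule ccontr)
        assume "\<not> c < i"
        then have "xi D i \<le> xi D c" using i c_b unfolding A_def by (intro xi_mono) auto
        then show False using i br2 unfolding A_def med_def by auto
      qed
      have gi: "real (pctl_loss D a) = real i - real c" using ic i(2) by simp
      define a2 where "a2 = (a + T) / 2"
      have a2T: "T < a2" "a2 < a" using br2 unfolding a2_def by auto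
      have a2V: "a2 \<in> Vset m" using a TV a2T unfolding Vset_def by auto
      have "N a2 \<le> i - 1" unfolding N_def using i a2T unfolding A_def by (intro cnt_upper) auto
      then have Na2: "real (N a2) \<le> real i - 1" using i unfolding A_def by auto
      show ?thesis
      proof (cases "F a2 \<ge> 3/4")
        case True
        then have "real n * F a2 \<ge> real n * (3/4)" using len by (intro mult_left_mono) auto
        then show ?thesis using N_lo[of a2] Na2 gi nl0 npos ab cr nl by argo
      next
        case False
        have "F T \<ge> 1/4"
        proof -
          have "real n * (1/4) \<le> real n * F T" using FT cr nl npos by argo
          then show ?thesis using npos by (rule mult_left_le_imp_le)
        qed
        then have G: "real n * F a2 - real n * F T \<ge> real n * (a2 - T) / (4 * m)"
          using False a2V TV a2T by (intro mult_n_growth) auto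
        have "real n * (a2 - T) / (4 * m) = X"
          using br2 unfolding a2_def X_def by (simp add: field_simps)
        then show ?thesis using G N_lo[of a2] Na2 gi nl0 npos FT cr npos by argo
      qed
    next
      case False
      then have "pctl_loss D a = c" using nb1 unfolding pctl_loss_def Let_def by auto
      then show ?thesis using ab cr nl0 by simp
    qed
  qed
  qed
  then show ?thesis unfolding X_def .
qed

end


context dset0
begin

lemma FAIR_eq: "FAIR D l = \<bar>l - T\<bar>"
proof -
  let ?h = "\<lambda>i. \<bar>xi D i - l\<bar> - \<bar>xi D i - T\<bar>"
  have tri: "\<And>x. \<bar>x - l\<bar> - \<bar>x - T\<bar> \<le> \<bar>l - T\<bar>" by arith
  have le: "\<And>y. y \<in> ?h ` {1..n} \<Longrightarrow> y \<le> \<bar>l - T\<bar>" using tri by blast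
  have mem: "\<bar>l - T\<bar> \<in> ?h ` {1..n}"
  proof (cases "T \<le> l")
    case True
    have "xi D 1 \<le> T" using x1_le_T[OF len] by simp
    then have e: "\<bar>l - T\<bar> = ?h 1" using True by simp
    have "1 \<in> {1..n}" using len by simp
    then show ?thesis using e by (intro rev_image_eqI[where f="?h"])
  next
    case False
    have "T \<le> xi D n" using x1_le_T[OF len] by simp
    then have e: "\<bar>l - T\<bar> = ?h n" using False by simp
    have "n \<in> {1..n}" using len by simp
    then show ?thesis using e by (intro rev_image_eqI[where f="?h"])
  qed
  show ?thesis unfolding FAIR_def by (rule Max_eqI) (use le mem in auto)
qed

end

context dset
begin

lemma lam_half: "1 \<le> 2 * (real n * lam)"
proof (cases "T = -m/2")
  case True
  have "F T = 0" using F_V[OF TV] True by simp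
  then have "real n * F T = 0" by simp
  then show ?thesis using FT_lo c_real npos by argo
next
  case False
  then have Tgt: "-m/2 < T" using TV unfolding Vset_def by auto
  show ?thesis
  proof (rule ccontr)
    assume H: "\<not> 1 \<le> 2 * (real n * lam)"
    define M where "M = f mu + 1"
    have M: "0 < M" unfolding M_def using nonneg[OF mu_V] by simp
    define \<delta> where "\<delta> = min (T + m/2) ((1 - 2 * (real n * lam)) / (2 * real n * M))"
    have p1: "0 < T + m/2" using Tgt by simp
    have p2: "0 < (1 - 2 * (real n * lam)) / (2 * real n * M)" using H M npos by (intro divide_pos_pos) auto
    have d0: "0 < \<delta>" unfolding \<delta>_def using p1 p2 by simp
    have d1: "\<delta> \<le> T + m/2" unfolding \<delta>_def by auto
    have d2: "\<delta> \<le> (1 - 2 * (real n * lam)) / (2 * real n * M)" unfolding \<delta>_def by auto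
    have uV: "T - \<delta> \<in> Vset m" using d0 d1 TV unfolding Vset_def by auto
    have "N (T - \<delta>) \<le> c - 1" unfolding N_def using c_b d0 by (intro cnt_upper) (auto simp: med_def)
    then have Nu: "real (N (T - \<delta>)) \<le> real c - 1" using c_b by linarith
    have lip: "F T - F (T - \<delta>) \<le> \<delta> * f mu" using F_lip[OF uV TV] d0 by simp
    have "\<delta> * f mu \<le> \<delta> * M" using d0 unfolding M_def by simp
    then have "real n * (F T - F (T - \<delta>)) \<le> real n * (\<delta> * M)" using lip npos
      by (intro mult_left_mono) auto
    moreover have "real n * (\<delta> * M) \<le> (1 - 2 * (real n * lam)) / 2"
    proof -
      have "\<delta> * (2 * real n * M) \<le> 1 - 2 * (real n * lam)" using d2 M npos by (simp add: pos_le_divide_eq)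
      then show ?thesis by (simp add: algebra_simps)
    qed
    moreover have "real n * (F T - F (T - \<delta>)) = real n * F T - real n * F (T - \<delta>)" by (simp add: algebra_simps)
    ultimately have "real n * F T - real n * F (T - \<delta>) \<le> (1 - 2 * (real n * lam)) / 2" by argo
    then show False using FT_lo N_lo[of "T - \<delta>"] Nu H by argo
  qed
qed

end


context dset0
begin

lemma w_nonneg: "0 \<le> expmed_weight \<epsilon> m \<alpha> D l"
  unfolding expmed_weight_def by simp

lemma w_int:
  assumes "0 \<le> \<alpha>" "0 \<le> \<epsilon>"
  shows "expmed_weight \<epsilon> m \<alpha> D integrable_on {-m/2..m/2}"
proof -
  let ?w = "expmed_weight \<epsilon> m \<alpha> D"
  have TV': "-m/2 \<le> T" "T \<le> m/2" using TV unfolding Vset_def by auto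
  have L: "mono_on {-m/2..T} ?w"
  proof (rule mono_onI)
    fix x y assume xy: "x \<in> {-m/2..T}" "y \<in> {-m/2..T}" "x \<le> y"
    have "widened_loss m \<alpha> D y \<le> widened_loss m \<alpha> D x"
      using xy TV' by (intro p_anti[OF len assms(1) m]) (auto simp: Vset_def)
    then have "(\<epsilon> / 2) * real (widened_loss m \<alpha> D y) \<le> (\<epsilon> / 2) * real (widened_loss m \<alpha> D x)"
      using assms by (intro mult_left_mono) auto
    then show "?w x \<le> ?w y" unfolding expmed_weight_def by simp
  qed
  have R: "mono_on {T..m/2} (\<lambda>l. - ?w l)"
  proof (rule mono_onI)
    fix x y assume xy: "x \<in> {T..m/2}" "y \<in> {T..m/2}" "x \<le> y"
    have "widened_loss m \<alpha> D x \<le> widened_loss m \<alpha> D y"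
      using xy TV' by (intro p_mono[OF len assms(1) m]) (auto simp: Vset_def)
    then have "(\<epsilon> / 2) * real (widened_loss m \<alpha> D x) \<le> (\<epsilon> / 2) * real (widened_loss m \<alpha> D y)"
      using assms by (intro mult_left_mono) auto
    then show "- ?w x \<le> - ?w y" unfolding expmed_weight_def by simp
  qed
  have iL: "?w integrable_on {-m/2..T}" by (rule integrable_on_mono_on[OF L])
  have "(\<lambda>l. - ?w l) integrable_on {T..m/2}" by (rule integrable_on_mono_on[OF R])
  then have "(\<lambda>l. - (- ?w l)) integrable_on {T..m/2}" by (rule integrable_neg)
  then have iR: "?w integrable_on {T..m/2}" by simp
  show ?thesis by (rule Henstock_Kurzweil_Integration.integrable_combine[OF TV' iL iR])
qed

lemma den_lower:
  assumes "0 < \<alpha>" "\<alpha> \<le> 1/2" "0 \<le> \<epsilon>"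
  shows "\<alpha> * m \<le> integral {-m/2..m/2} (expmed_weight \<epsilon> m \<alpha> D)"
proof -
  let ?w = "expmed_weight \<epsilon> m \<alpha> D"
  have wi: "?w integrable_on {-m/2..m/2}" using w_int assms by auto
  have am: "0 < \<alpha> * m" using assms m by simp
  have am2: "\<alpha> * m \<le> m / 2" using assms m by (simp add: mult_right_mono[of \<alpha> "1/2" m, simplified])
  obtain a b where ab: "b - a = \<alpha> * m" "-m/2 \<le> a" "b \<le> m/2" "\<And>l. l \<in> {a..b} \<Longrightarrow> \<bar>l - T\<bar> \<le> \<alpha> * m"
  proof (cases "T + \<alpha> * m \<le> m/2")
    case True
    show ?thesis
    proof (rule that[where a=T and b="T + \<alpha> * m"])
      show "T + \<alpha> * m - T = \<alpha> * m" by simp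
      show "-m/2 \<le> T" using TV by (simp add: Vset_def)
      show "T + \<alpha> * m \<le> m/2" using True .
      show "\<bar>l - T\<bar> \<le> \<alpha> * m" if "l \<in> {T..T + \<alpha> * m}" for l using that by auto
    qed
  next
    case False
    show ?thesis
    proof (rule that[where a="T - \<alpha> * m" and b=T])
      show "T - (T - \<alpha> * m) = \<alpha> * m" by simp
      show "-m/2 \<le> T - \<alpha> * m" using False am2 by linarith
      show "T \<le> m/2" using TV by (simp add: Vset_def)
      show "\<bar>l - T\<bar> \<le> \<alpha> * m" if "l \<in> {T - \<alpha> * m..T}" for l using that by auto
    qed
  qed
  have one: "\<And>l. l \<in> {a..b} \<Longrightarrow> ?w l = 1"
  proof -
    fix l assume l: "l \<in> {a..b}"
    have "widened_loss m \<alpha> D l = 0" by (rule p_zero[OF len TV ab(4)[OF l]])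
    then show "?w l = 1" unfolding expmed_weight_def by simp
  qed
  have "integral {a..b} ?w = integral {a..b} (\<lambda>l. 1::real)" by (rule integral_cong) (use one in auto)
  also have "\<dots> = \<alpha> * m" using ab am by simp
  finally have e: "integral {a..b} ?w = \<alpha> * m" .
  have "integral {a..b} ?w \<le> integral {-m/2..m/2} ?w"
    using ab w_nonneg by (intro integral_subset_le integrable_on_subinterval[OF wi] wi) auto
  then show ?thesis using e by simp
qed

end


lemma arctan_int:
  fixes A k T a b :: real
  assumes "a \<le> b" "0 < k" "0 \<le> A"
  shows "((\<lambda>l. (2 * A / k) * (inverse (1 + (k * (l - T))\<^sup>2) * k)) has_integral
           ((2 * A / k) * arctan (k * (b - T)) - (2 * A / k) * arctan (k * (a - T)))) {a..b}"
proof -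
  have D: "\<And>x. ((\<lambda>l. (2 * A / k) * arctan (k * (l - T))) has_real_derivative
              (2 * A / k) * (inverse (1 + (k * (x - T))\<^sup>2) * k)) (at x)"
  proof -
    fix x
    have d1: "((\<lambda>l. k * (l - T)) has_real_derivative k) (at x)"
      by (auto intro!: derivative_eq_intros)
    have "((\<lambda>l. arctan (k * (l - T))) has_real_derivative inverse (1 + (k * (x - T))\<^sup>2) * k) (at x)"
      by (rule DERIV_chain2[OF DERIV_arctan d1])
    then show "((\<lambda>l. (2 * A / k) * arctan (k * (l - T))) has_real_derivative
              (2 * A / k) * (inverse (1 + (k * (x - T))\<^sup>2) * k)) (at x)"
      by (rule DERIV_cmult)
  qed
  have V: "((\<lambda>l. (2 * A / k) * arctan (k * (l - T))) has_vector_derivative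
              (2 * A / k) * (inverse (1 + (k * (x - T))\<^sup>2) * k)) (at x within {a..b})" if "x \<in> {a..b}" for x
  proof -
    have "((\<lambda>l. (2 * A / k) * arctan (k * (l - T))) has_vector_derivative
              (2 * A / k) * (inverse (1 + (k * (x - T))\<^sup>2) * k)) (at x)"
      using D[of x] by (simp only: has_real_derivative_iff_has_vector_derivative)
    then show ?thesis by (rule has_vector_derivative_at_within)
  qed
  from fundamental_theorem_of_calculus[OF assms(1) V] show ?thesis .
qed

lemma arctan_int_bound:
  fixes A k T a b :: real
  assumes "0 < k" "0 \<le> A"
  shows "(2 * A / k) * arctan (k * (b - T)) - (2 * A / k) * arctan (k * (a - T)) \<le> 2 * A * pi / k"
proof -
  have "arctan (k * (b - T)) - arctan (k * (a - T)) \<le> pi"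
    using arctan_ubound[of "k * (b - T)"] arctan_lbound[of "k * (a - T)"] by linarith
  then have "(2 * A / k) * (arctan (k * (b - T)) - arctan (k * (a - T))) \<le> (2 * A / k) * pi"
    using assms by (intro mult_left_mono) auto
  moreover have eq: "(2 * A / k) * pi = 2 * A * pi / k" by simp
  ultimately show ?thesis by (simp only: right_diff_distrib)
qed

lemma exp_quad:
  fixes y :: real
  assumes "0 \<le> y"
  shows "exp (- y) \<le> 2 * inverse (1 + y\<^sup>2)"
proof -
  have "1 + y + y\<^sup>2 / 2 \<le> exp y" by (rule exp_lower_Taylor_quadratic[OF assms])
  then have "1 + y\<^sup>2 \<le> 2 * exp y" using assms by simp
  then have "inverse (2 * exp y) \<le> inverse (1 + y\<^sup>2)"
    by (intro le_imp_inverse_le) (auto simp: add_pos_nonneg)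
  then show ?thesis by (simp add: exp_minus field_simps)
qed

lemma numeric:
  fixes \<beta> :: real
  assumes "0 < \<beta>" "\<beta> < 1/3"
  shows "128 * pi * exp (1/16) * exp (25 * ln (2 * \<beta>)) \<le> \<beta>"
proof -
  have e: "exp (25 * ln (2 * \<beta>)) = (2 * \<beta>) ^ 25"
    using exp_of_nat_mult[of 25 "ln (2 * \<beta>)"] assms by simp
  have e1: "exp (1/16::real) \<le> 3"
    using exp_le exp_le_cancel_iff[of "1/16::real" 1] by linarith
  have pb: "\<beta> ^ 24 \<le> (1/3) ^ 24" using assms by (intro power_mono) auto
  have b25: "\<beta> ^ 25 = \<beta> * \<beta> ^ 24"
  proof -
    have "\<beta> ^ 25 = \<beta> ^ (1 + 24)" by simp
    also have "\<dots> = \<beta> ^ 1 * \<beta> ^ 24" by (rule power_add)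
    finally show ?thesis by simp
  qed
  have "(2 * \<beta>) ^ 25 = 2 ^ 25 * \<beta> * \<beta> ^ 24" by (simp add: power_mult_distrib b25)
  also have "\<dots> \<le> 2 ^ 25 * \<beta> * (1/3) ^ 24" using pb assms by (intro mult_left_mono) auto
  finally have p: "(2 * \<beta>) ^ 25 \<le> 2 ^ 25 * \<beta> * (1/3) ^ 24" .
  have "128 * pi * exp (1/16) * exp (25 * ln (2 * \<beta>)) \<le> 128 * 4 * 3 * (2 ^ 25 * \<beta> * (1/3) ^ 24)"
    unfolding e using p e1 pi_less_4 pi_gt_zero assms
    by (intro mult_mono) auto
  also have "\<dots> \<le> \<beta>" using assms by (simp add: power_one_over)
  finally show ?thesis .
qed


context dset0
begin

lemma prob_form:
  assumes "\<And>l. FAIR D l \<le> B \<longleftrightarrow> l \<in> {T - B..T + B}"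
  shows "expmed_prob \<epsilon> m \<alpha> D {l. FAIR D l \<le> B} =
    integral {-m/2..m/2} (\<lambda>l. if l \<in> {T - B..T + B} then expmed_weight \<epsilon> m \<alpha> D l else 0)
    / integral {-m/2..m/2} (expmed_weight \<epsilon> m \<alpha> D)"
  unfolding expmed_prob_def Vset_def using assms by simp

lemma FAIR_iff: "FAIR D l \<le> B \<longleftrightarrow> l \<in> {T - B..T + B}"
  unfolding FAIR_eq by auto

lemma main_big:
  fixes \<epsilon> \<beta> :: real
  assumes e0: "0 < \<epsilon>" and a0: "0 < \<alpha>" and a1: "\<alpha> \<le> 1/2" and b0: "0 < \<beta>" and big: "m \<le> B"
  shows "1 - \<beta> \<le> expmed_prob \<epsilon> m \<alpha> D {l. FAIR D l \<le> B}"
proof -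
  let ?w = "expmed_weight \<epsilon> m \<alpha> D"
  have D0: "\<alpha> * m \<le> integral {-m/2..m/2} ?w" using den_lower a0 a1 e0 by auto
  have pos: "0 < integral {-m/2..m/2} ?w" using D0 a0 m by (meson less_le_trans mult_pos_pos)
  have "integral {-m/2..m/2} (\<lambda>l. if l \<in> {T - B..T + B} then ?w l else 0) = integral {-m/2..m/2} ?w"
  proof (rule integral_cong)
    fix l assume l: "l \<in> {-m/2..m/2}"
    have "\<bar>l - T\<bar> \<le> m" using l TV unfolding Vset_def by auto
    then have "l \<in> {T - B..T + B}" using big by auto
    then show "(if l \<in> {T - B..T + B} then ?w l else 0) = ?w l" by simp
  qed
  then have "expmed_prob \<epsilon> m \<alpha> D {l. FAIR D l \<le> B} = 1"
    unfolding prob_form[OF FAIR_iff] using pos by simp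
  then show ?thesis using b0 by simp
qed

end

context dset
begin

lemma main_small:
  fixes \<epsilon> \<beta> :: real
  assumes e0: "0 < \<epsilon>" and b0: "0 < \<beta>" and b1: "\<beta> < 1/3"
    and ne: "2 * ln (1/\<beta>) \<le> real n * \<epsilon>"
  shows "1 - \<beta> \<le> expmed_prob \<epsilon> m (1 / (real n * \<epsilon>)) D
           {l. FAIR D l \<le> 1600 * (m / (real n * \<epsilon>) * ln (real n * lam / \<beta>) + m * lam)}"
proof -
  define \<alpha> where "\<alpha> = 1 / (real n * \<epsilon>)"
  define s where "s = real n * \<epsilon> / m"
  define L where "L = ln (real n * lam / \<beta>)"
  define B where "B = 1600 * (m / (real n * \<epsilon>) * L + m * lam)"
  define w where "w = expmed_weight \<epsilon> m \<alpha> D"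
  define k where "k = s / 64"
  define A where "A = exp (1/16) * exp (- (s * B / 64))"
  have lam0: "0 \<le> lam" using ks[of 0] by linarith
  have ln3: "1 \<le> ln (1/\<beta>)"
  proof -
    have "3 \<le> 1/\<beta>" using b0 b1 by (simp add: field_simps)
    then have "exp 1 \<le> 1/\<beta>" using exp_le by linarith
    then show ?thesis using b0 by (subst ln_ge_iff) auto
  qed
  have neps: "2 \<le> real n * \<epsilon>" using ne ln3 by linarith
  have ne0: "0 < real n * \<epsilon>" using neps by linarith
  have a0: "0 < \<alpha>" unfolding \<alpha>_def using ne0 by simp
  have a1: "\<alpha> \<le> 1/2" unfolding \<alpha>_def using neps by (simp add: field_simps)
  have s0: "0 < s" unfolding s_def using ne0 m by simp
  have k0: "0 < k" unfolding k_def using s0 by simp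
  have A0: "0 \<le> A" unfolding A_def by simp
  have am: "\<alpha> * m = 1 / s"
  proof -
    have "real n \<noteq> 0" "\<epsilon> \<noteq> 0" "m \<noteq> 0" using npos e0 m by auto
    then show ?thesis unfolding s_def \<alpha>_def by (simp add: field_simps)
  qed
  have wi: "w integrable_on {-m/2..m/2}" unfolding w_def using w_int a0 e0 by auto
  have D0: "1 / s \<le> integral {-m/2..m/2} w" unfolding w_def using den_lower[OF a0 a1] e0 am by auto
  have lh: "1 \<le> 2 * (real n * lam)" by (rule lam_half)
  have L2: "ln (1 / (2 * \<beta>)) \<le> L"
  proof -
    have le: "1 / (2 * \<beta>) \<le> real n * lam / \<beta>" using lh b0 by (simp add: field_simps)
    have p1: "0 < 1 / (2 * \<beta>)" using b0 by simp
    have p2: "0 < real n * lam / \<beta>" using p1 le by linarith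
    show ?thesis unfolding L_def using ln_le_cancel_iff[OF p1 p2] le by simp
  qed
  have L0: "0 \<le> L"
  proof -
    have "1 \<le> 1 / (2 * \<beta>)" using b0 b1 by (simp add: field_simps)
    then have "0 \<le> ln (1 / (2 * \<beta>))" by simp
    then show ?thesis using L2 by linarith
  qed
  have sB: "s * B = 1600 * L + 1600 * (\<epsilon> * (real n * lam))"
  proof -
    have "real n \<noteq> 0" "\<epsilon> \<noteq> 0" "m \<noteq> 0" using npos e0 m by auto
    then show ?thesis unfolding s_def B_def by (simp add: field_simps)
  qed
  have B0: "0 \<le> B" unfolding B_def using L0 lam0 m ne0 by (simp add: mult_nonneg_nonneg)
  have Kq: "\<And>a. a \<in> Vset m \<Longrightarrow> real (pctl_loss D a) \<ge> real n / (8 * m) * \<bar>a - T\<bar> - 2 * (real n * lam)"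
    by (rule q_lower)
  have bad: "w l \<le> A * exp (- (k * \<bar>l - T\<bar>))" if l: "l \<in> {-m/2..m/2}" "B < \<bar>l - T\<bar>" for l
  proof -
    define d where "d = \<bar>l - T\<bar>"
    have lV: "l \<in> Vset m" using l unfolding Vset_def by simp
    have P: "real (widened_loss m \<alpha> D l) \<ge> real n / (8 * m) * (d - \<alpha> * m) - 2 * (real n * lam)"
      unfolding d_def using p_lower[OF len a0[THEN less_imp_le] m lV _ Kq] m by simp
    have eqP: "(\<epsilon> / 2) * (real n / (8 * m) * (d - \<alpha> * m) - 2 * (real n * lam))
               = s * d / 16 - 1 / 16 - \<epsilon> * (real n * lam)"
    proof -
      have "real n \<noteq> 0" "\<epsilon> \<noteq> 0" "m \<noteq> 0" using npos e0 m by auto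
      then show ?thesis unfolding s_def \<alpha>_def by (simp add: field_simps)
    qed
    have "(\<epsilon> / 2) * (real n / (8 * m) * (d - \<alpha> * m) - 2 * (real n * lam)) \<le> (\<epsilon> / 2) * real (widened_loss m \<alpha> D l)"
      using P e0 by (intro mult_left_mono) auto
    then have E1: "- ((\<epsilon> / 2) * real (widened_loss m \<alpha> D l)) \<le> - (s * d / 16) + 1 / 16 + \<epsilon> * (real n * lam)"
      using eqP by linarith
    have sd: "s * B \<le> s * d" using l s0 unfolding d_def by (intro mult_left_mono) auto
    have "\<epsilon> * (real n * lam) \<ge> 0" using e0 lam0 by simp
    then have E2: "- (s * d / 16) + 1 / 16 + \<epsilon> * (real n * lam) \<le> 1/16 + (- (s * B / 64)) + (- (k * d))"
      using sd sB L0 unfolding k_def by argo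
    have "w l = exp (- ((\<epsilon> / 2) * real (widened_loss m \<alpha> D l)))"
      unfolding w_def expmed_weight_def by simp
    also have "\<dots> \<le> exp (1/16 + (- (s * B / 64)) + (- (k * d)))" using E1 E2 by simp
    also have "\<dots> = A * exp (- (k * d))" unfolding A_def by (simp only: exp_add)
    finally show ?thesis unfolding d_def .
  qed
  define h where "h = (\<lambda>l. (2 * A / k) * (inverse (1 + (k * (l - T))\<^sup>2) * k))"
  have hint: "(h has_integral ((2 * A / k) * arctan (k * (m/2 - T)) - (2 * A / k) * arctan (k * (-m/2 - T)))) {-m/2..m/2}"
    unfolding h_def using m k0 A0 by (intro arctan_int) auto
  have hI: "integral {-m/2..m/2} h \<le> 2 * A * pi / k"
    using integral_unique[OF hint] arctan_int_bound[OF k0 A0] by simp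
  have h_eq: "h l = A * (2 * inverse (1 + (k * \<bar>l - T\<bar>)\<^sup>2))" for l
  proof -
    have "(k * \<bar>l - T\<bar>)\<^sup>2 = (k * (l - T))\<^sup>2" by (simp add: power_mult_distrib)
    then show ?thesis unfolding h_def using k0 by simp
  qed
  define I where "I = {T - B..T + B}"
  define g1 where "g1 = (\<lambda>l. if l \<in> I then w l else 0)"
  have g1i: "g1 integrable_on {-m/2..m/2}"
  proof -
    have "I \<inter> {-m/2..m/2} = {max (T - B) (-m/2)..min (T + B) (m/2)}" unfolding I_def by auto
    moreover have "{max (T - B) (-m/2)..min (T + B) (m/2)} \<subseteq> {-m/2..m/2}"
    proof
      fix x assume "x \<in> {max (T - B) (-m/2)..min (T + B) (m/2)}"
      then have "max (T - B) (-m/2) \<le> x" "x \<le> min (T + B) (m/2)" by auto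
      then show "x \<in> {-m/2..m/2}" by simp
    qed
    then have "w integrable_on {max (T - B) (-m/2)..min (T + B) (m/2)}"
      by (rule integrable_on_subinterval[OF wi])
    ultimately have "w integrable_on (I \<inter> {-m/2..m/2})" by simp
    then show ?thesis unfolding g1_def by (subst integrable_restrict_Int)
  qed
  define g2 where "g2 = (\<lambda>l. w l - g1 l)"
  have g2i: "g2 integrable_on {-m/2..m/2}" unfolding g2_def by (rule integrable_diff[OF wi g1i])
  have g2I: "integral {-m/2..m/2} g2 = integral {-m/2..m/2} w - integral {-m/2..m/2} g1"
    unfolding g2_def by (rule integral_diff[OF wi g1i])
  have g2h: "g2 l \<le> h l" if l: "l \<in> {-m/2..m/2}" for l
  proof (cases "l \<in> I")
    case True
    have "0 \<le> h l" unfolding h_eq using A0 by (simp add: add_pos_nonneg)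
    then show ?thesis using True unfolding g2_def g1_def by simp
  next
    case False
    then have "B < \<bar>l - T\<bar>" unfolding I_def by auto
    then have "w l \<le> A * exp (- (k * \<bar>l - T\<bar>))" using bad l by blast
    also have "\<dots> \<le> A * (2 * inverse (1 + (k * \<bar>l - T\<bar>)\<^sup>2))"
      using A0 k0 by (intro mult_left_mono exp_quad) auto
    finally show ?thesis using False unfolding g2_def g1_def h_eq by simp
  qed
  have "integral {-m/2..m/2} g2 \<le> integral {-m/2..m/2} h"
    by (rule integral_le[OF g2i]) (use hint g2h in auto)
  also have "\<dots> \<le> 2 * A * pi / k" by (rule hI)
  also have "2 * A * pi / k = (128 * pi * A) / s" unfolding k_def using s0 by (simp add: field_simps)
  also have "\<dots> \<le> \<beta> / s"
  proof -
    have "- (s * B / 64) \<le> 25 * ln (2 * \<beta>)"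
    proof -
      have "ln (1 / (2 * \<beta>)) = - ln (2 * \<beta>)" using b0 by (simp add: ln_div)
      moreover have "0 \<le> \<epsilon> * (real n * lam)" using e0 lam0 by simp
      ultimately show ?thesis using sB L2 by argo
    qed
    then have "A \<le> exp (1/16) * exp (25 * ln (2 * \<beta>))" unfolding A_def by simp
    then have "128 * pi * A \<le> 128 * pi * (exp (1/16) * exp (25 * ln (2 * \<beta>)))" by simp
    also have "\<dots> \<le> \<beta>" using numeric[OF b0 b1] by (simp add: mult.assoc)
    finally show ?thesis using s0 by (simp add: divide_right_mono)
  qed
  also have "\<beta> / s \<le> \<beta> * integral {-m/2..m/2} w"
  proof -
    have "\<beta> * (1 / s) \<le> \<beta> * integral {-m/2..m/2} w" using D0 b0 by (intro mult_left_mono) auto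
    then show ?thesis by simp
  qed
  finally have G2: "integral {-m/2..m/2} g2 \<le> \<beta> * integral {-m/2..m/2} w" .
  have pos: "0 < integral {-m/2..m/2} w" using D0 s0 by (meson less_le_trans zero_less_divide_1_iff)
  have num: "(1 - \<beta>) * integral {-m/2..m/2} w \<le> integral {-m/2..m/2} g1"
    using G2 g2I by (simp add: algebra_simps)
  have "expmed_prob \<epsilon> m \<alpha> D {l. FAIR D l \<le> B} = integral {-m/2..m/2} g1 / integral {-m/2..m/2} w"
    unfolding prob_form[OF FAIR_iff] g1_def w_def I_def by simp
  also have "1 - \<beta> \<le> \<dots>" using num pos by (simp add: pos_le_divide_eq)
  finally show ?thesis unfolding \<alpha>_def B_def L_def .
qed

end


lemma final_main:
  fixes m lam \<beta> \<epsilon> :: real and n :: nat and D :: "real list"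
  assumes m0: "m > 0" and lp: "lam > 0" and b0: "0 < \<beta>" and b1: "\<beta> < 1/3"
    and e0: "0 < \<epsilon>" and e1: "\<epsilon> < 1" and od: "odd n"
    and ne: "real n * \<epsilon> \<ge> 2 * ln (1 / \<beta>)" and nb: "real n \<ge> \<beta> / lam"
    and ln: "length D = n" and spm: "SPM m lam D"
  shows "expmed_prob \<epsilon> m (1 / (real n * \<epsilon>)) D
         {l. FAIR D l \<le> 1600 * (m / (real n * \<epsilon>) * ln (real n * lam / \<beta>) + m * lam)}
       \<ge> 1 - \<beta>"
proof -
  obtain f where setD: "set D \<subseteq> Vset m" and cls: "in_classP m f"
    and ks: "\<And>x. \<bar>emp_cdf D x - cdf_of m f x\<bar> \<le> lam"
    using spm unfolding SPM_def by blast
  have n1: "length D \<ge> 1" using od ln by (cases n) auto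
  interpret d0: dset0 m f D
    by unfold_locales (use m0 cls n1 od ln setD in auto)
  show ?thesis
  proof (cases "1600 * lam < 1")
    case True
    interpret d: dset m f D lam
    proof unfold_locales
      show "\<bar>emp_cdf D x - dens.F m f x\<bar> \<le> lam" for x using ks[of x] unfolding dens.F_def[OF d0.dens_axioms] .
      show "lam \<le> 1/4" using True by simp
    qed
    show ?thesis using d.main_small[OF e0 b0 b1] ne ln by simp
  next
    case False
    have ln3: "1 \<le> ln (1/\<beta>)"
    proof -
      have "3 \<le> 1/\<beta>" using b0 b1 by (simp add: field_simps)
      then have "exp 1 \<le> 1/\<beta>" using exp_le by linarith
      then show ?thesis using b0 by (subst ln_ge_iff) auto
    qed
    have neps: "2 \<le> real n * \<epsilon>" using ne ln3 by linarith
    have a0: "0 < 1 / (real n * \<epsilon>)" using neps by simp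
    have a1: "1 / (real n * \<epsilon>) \<le> 1/2" using neps by (simp add: field_simps)
    have L0: "0 \<le> ln (real n * lam / \<beta>)"
    proof -
      have "1 \<le> real n * lam / \<beta>" using nb lp b0 by (simp add: field_simps)
      then show ?thesis by simp
    qed
    have "0 \<le> m / (real n * \<epsilon>) * ln (real n * lam / \<beta>)" using L0 m0 neps by simp
    moreover have "m \<le> 1600 * (m * lam)" using False m0 by (simp add: mult.left_commute[of 1600] mult_le_cancel_left1 [symmetric])
    ultimately have big: "m \<le> 1600 * (m / (real n * \<epsilon>) * ln (real n * lam / \<beta>) + m * lam)" by argo
    show ?thesis using d0.main_big[OF e0 a0 a1 b0 big] by simp
  qed
qed

theorem theorem7p18:
  shows "\<exists>C C'. C > 0 \<and> C' > 0 \<and>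
    (\<forall>(m::real) (lam::real) (\<beta>::real) (\<epsilon>::real) (n::nat) (D::real list).
       m > 0 \<longrightarrow> lam > 0 \<longrightarrow> 0 < \<beta> \<longrightarrow> \<beta> < 1/3 \<longrightarrow> 0 < \<epsilon> \<longrightarrow> \<epsilon> < 1 \<longrightarrow>
       odd n \<longrightarrow> real n * \<epsilon> \<ge> C * ln (1 / \<beta>) \<longrightarrow> real n \<ge> \<beta> / lam \<longrightarrow>
       length D = n \<longrightarrow> SPM m lam D \<longrightarrow>
       expmed_prob \<epsilon> m (1 / (real n * \<epsilon>)) D
         {l. FAIR D l \<le> C' * (m / (real n * \<epsilon>) * ln (real n * lam / \<beta>) + m * lam)}
       \<ge> 1 - \<beta>)"
  apply (rule exI[of _ 2], rule exI[of _ 1600])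
  using final_main by auto


end
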